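(* Let $G$ be a trigraph containing two disjoint vertical sets $V^j=\{x^j,y^j\}\cup V(F^j)$ and $V^{j'}=\{x^{j'},y^{j'}\}\cup V(F^{j'})$ with an arc from $V^j$ to $V^{j'}$, where both fence gadgets $F^j$ and $F^{j'}$ satisfy the attachment rule in $G$. Then in any partial $4$-sequence from $G$, any contraction involving two vertices of $V^{j'}$ is preceded by (or is itself) the contraction that puts $x^j$ and $y^j$ into the same part.
   Context: A trigraph $G$ consists of a vertex set $V(G)$ and two disjoint sets of unordered pairs of distinct vertices: black edges and red edges; the red graph is formed by the red edges. Contracting two distinct vertices $u,v$ replaces them by a new vertex $w$ such that, for every other vertex $z$, $wz$ is black if $uz,vz$ are both black, a non-edge if both are non-edges, and red otherwise. A partial $d$-sequence from $G$ is a sequence of trigraphs starting at $G$, each obtained from the previous by one contraction, all of maximum red degree at most $d$. Each vertex $u$ of a later trigraph corresponds to the set $u(G)$ (its part) of vertices of $G$ merged into it; a contraction of $u,u'$ involves two vertices $v,v'$ of $G$ if $v\in u(G),v'\in u'(G)$ or vice versa. A fence gadget is a trigraph $F$ on $A\cup B$, $A=\{a_1,\dots,a_6\}$, $B=\{b_1,\dots,b_6\}$, whose black edges are those of the cycles $a_1a_2a_3a_4a_5a_6a_1$ and $b_1b_2b_3b_4b_5b_6b_1$ together with $b_1a_6$, and whose red edges are $a_ib_i$ for $i\in[6]$ and $a_ib_{i+1}$ for $i\in[5]$. Inside a trigraph $G$, $F$ is attached to a nonempty set $S\subseteq V(G)\setminus V(F)$ if every vertex of $A$ is joined by a black edge to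 every vertex of $S$ and no vertex of $B$ is adjacent to a vertex of $S$. $F$ satisfies the attachment rule in $G$ if $V(F)$ is the vertex set of a connected component of the red graph of $G$ and there is a set $X\subseteq V(G)\setminus(V(F)\cup S)$ such that every vertex of $A$ has exactly $X\cup S$ as its set of neighbours outside $V(F)$, every vertex of $B$ has exactly $X$ as its set of neighbours outside $V(F)$ (all these edges black), and every vertex of $X$ is adjacent to every vertex of $S$. A vertical set is a set $\{x,y\}\cup V(F)$ where $F$ is a fence gadget attached to $\{x,y\}$; $\{x,y\}$ is its vertical pair. An arc from a vertical set $V^j$ to a vertical set $V^{j'}$ means that $x^{j'}$ is joined by black edges to every vertex of $V^j$ while $y^{j'}$ has no neighbour in $V^j$. *)

theory Defs
  imports Main
begin

record 'v trigraph =
  verts :: "'v set"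
  black :: "'v set set"
  red   :: "'v set set"

definition wf_trigraph :: "'v trigraph \<Rightarrow> bool" where
  "wf_trigraph T \<longleftrightarrow> finite (verts T)
     \<and> black T \<subseteq> {{p, q} | p q. p \<in> verts T \<and> q \<in> verts T \<and> p \<noteq> q}
     \<and> red T \<subseteq> {{p, q} | p q. p \<in> verts T \<and> q \<in> verts T \<and> p \<noteq> q}
     \<and> black T \<inter> red T = {}"

definition adjacent :: "'v trigraph \<Rightarrow> 'v \<Rightarrow> 'v \<Rightarrow> bool" where
  "adjacent T p q \<longleftrightarrow> {p, q} \<in> black T \<or> {p, q} \<in> red T"

definition contract :: "'v trigraph \<Rightarrow> 'v \<Rightarrow> 'v \<Rightarrow> 'v \<Rightarrow> 'v trigraph" where
  "contract T u v w =
     \<lparr> verts = (verts T - {u, v}) \<union> {w},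
       black = {e \<in> black T. u \<notin> e \<and> v \<notin> e}
               \<union> {{w, z} | z. z \<in> verts T - {u, v} \<and> {u, z} \<in> black T \<and> {v, z} \<in> black T},
       red = {e \<in> red T. u \<notin> e \<and> v \<notin> e}
               \<union> {{w, z} | z. z \<in> verts T - {u, v}
                    \<and> \<not> ({u, z} \<in> black T \<and> {v, z} \<in> black T)
                    \<and> \<not> (\<not> adjacent T u z \<and> \<not> adjacent T v z)} \<rparr>"

definition red_deg :: "'v trigraph \<Rightarrow> 'v \<Rightarrow> nat" where
  "red_deg T p = card {z \<in> verts T. {p, z} \<in> red T}"

definition max_red_deg_le :: "'v trigraph \<Rightarrow> nat \<Rightarrow> bool" where
  "max_red_deg_le T d \<longleftrightarrow> (\<forall>p \<in> verts T. red_deg T p \<le> d)"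

text \<open>The trigraph G with every vertex p replaced by its part {p}.  Vertices of
  later trigraphs of a contraction sequence are their parts (sets of vertices of G).\<close>
definition lift :: "'v trigraph \<Rightarrow> 'v set trigraph" where
  "lift G = \<lparr> verts = (\<lambda>p. {p}) ` verts G,
              black = {{{p}, {q}} | p q. {p, q} \<in> black G},
              red = {{{p}, {q}} | p q. {p, q} \<in> red G} \<rparr>"

fun trig_seq :: "'v set trigraph \<Rightarrow> ('v set \<times> 'v set) list \<Rightarrow> 'v set trigraph list" where
  "trig_seq T [] = [T]"
| "trig_seq T ((u, v) # cs) = T # trig_seq (contract T u v (u \<union> v)) cs"

definition seq_trigraphs :: "'v trigraph \<Rightarrow> ('v set \<times> 'v set) list \<Rightarrow> 'v set trigraph list" where
  "seq_trigraphs G cs = trig_seq (lift G) cs"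

definition partial_d_sequence :: "'v trigraph \<Rightarrow> nat \<Rightarrow> ('v set \<times> 'v set) list \<Rightarrow> bool" where
  "partial_d_sequence G d cs \<longleftrightarrow>
     (\<forall>i < length cs. fst (cs ! i) \<in> verts (seq_trigraphs G cs ! i)
                    \<and> snd (cs ! i) \<in> verts (seq_trigraphs G cs ! i)
                    \<and> fst (cs ! i) \<noteq> snd (cs ! i))
     \<and> (\<forall>T \<in> set (seq_trigraphs G cs). max_red_deg_le T d)"

definition involves :: "'v set \<times> 'v set \<Rightarrow> 'v \<Rightarrow> 'v \<Rightarrow> bool" where
  "involves c p q \<longleftrightarrow> (p \<in> fst c \<and> q \<in> snd c) \<or> (q \<in> fst c \<and> p \<in> snd c)"

definition fence_A :: "(nat \<Rightarrow> 'v) \<Rightarrow> 'v set" where "fence_A a = a ` {1..6}"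
definition fence_B :: "(nat \<Rightarrow> 'v) \<Rightarrow> 'v set" where "fence_B b = b ` {1..6}"
definition fence_V :: "(nat \<Rightarrow> 'v) \<Rightarrow> (nat \<Rightarrow> 'v) \<Rightarrow> 'v set" where
  "fence_V a b = fence_A a \<union> fence_B b"

definition fence_black :: "(nat \<Rightarrow> 'v) \<Rightarrow> (nat \<Rightarrow> 'v) \<Rightarrow> 'v set set" where
  "fence_black a b =
     {{a i, a (i + 1)} | i. i \<in> {1..5}} \<union> {{a 6, a 1}}
   \<union> {{b i, b (i + 1)} | i. i \<in> {1..5}} \<union> {{b 6, b 1}}
   \<union> {{b 1, a 6}}"

definition fence_red :: "(nat \<Rightarrow> 'v) \<Rightarrow> (nat \<Rightarrow> 'v) \<Rightarrow> 'v set set" where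
  "fence_red a b = {{a i, b i} | i. i \<in> {1..6}} \<union> {{a i, b (i + 1)} | i. i \<in> {1..5}}"

definition fence_in :: "'v trigraph \<Rightarrow> (nat \<Rightarrow> 'v) \<Rightarrow> (nat \<Rightarrow> 'v) \<Rightarrow> bool" where
  "fence_in G a b \<longleftrightarrow>
     inj_on a {1..6} \<and> inj_on b {1..6} \<and> fence_A a \<inter> fence_B b = {}
     \<and> fence_V a b \<subseteq> verts G
     \<and> {e \<in> black G. e \<subseteq> fence_V a b} = fence_black a b
     \<and> {e \<in> red G. e \<subseteq> fence_V a b} = fence_red a b"

definition attached :: "'v trigraph \<Rightarrow> (nat \<Rightarrow> 'v) \<Rightarrow> (nat \<Rightarrow> 'v) \<Rightarrow> 'v set \<Rightarrow> bool" where
  "attached G a b S \<longleftrightarrow>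
     fence_in G a b \<and> S \<noteq> {} \<and> S \<subseteq> verts G - fence_V a b
     \<and> (\<forall>p \<in> fence_A a. \<forall>s \<in> S. {p, s} \<in> black G)
     \<and> (\<forall>p \<in> fence_B b. \<forall>s \<in> S. \<not> adjacent G p s)"

definition red_rel :: "'v trigraph \<Rightarrow> ('v \<times> 'v) set" where
  "red_rel G = {(p, q). {p, q} \<in> red G}"

definition red_component :: "'v trigraph \<Rightarrow> 'v set \<Rightarrow> bool" where
  "red_component G C \<longleftrightarrow> C \<noteq> {} \<and> C \<subseteq> verts G
     \<and> (\<forall>p \<in> C. \<forall>z \<in> verts G. z \<in> C \<longleftrightarrow> (p, z) \<in> (red_rel G)\<^sup>*)"

definition attachment_rule :: "'v trigraph \<Rightarrow> (nat \<Rightarrow> 'v) \<Rightarrow> (nat \<Rightarrow> 'v) \<Rightarrow> 'v set \<Rightarrow> bool" where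
  "attachment_rule G a b S \<longleftrightarrow>
     red_component G (fence_V a b)
     \<and> (\<exists>X. X \<subseteq> verts G - (fence_V a b \<union> S)
         \<and> (\<forall>p \<in> fence_A a. {z \<in> verts G - fence_V a b. adjacent G p z} = X \<union> S
                            \<and> (\<forall>z \<in> X \<union> S. {p, z} \<in> black G))
         \<and> (\<forall>p \<in> fence_B b. {z \<in> verts G - fence_V a b. adjacent G p z} = X
                            \<and> (\<forall>z \<in> X. {p, z} \<in> black G))
         \<and> (\<forall>x \<in> X. \<forall>s \<in> S. adjacent G x s))"

definition vertical_set :: "'v trigraph \<Rightarrow> 'v \<Rightarrow> 'v \<Rightarrow> (nat \<Rightarrow> 'v) \<Rightarrow> (nat \<Rightarrow> 'v) \<Rightarrow> bool" where
  "vertical_set G x y a b \<longleftrightarrow> x \<noteq> y \<and> attached G a b {x, y}"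

definition vset :: "'v \<Rightarrow> 'v \<Rightarrow> (nat \<Rightarrow> 'v) \<Rightarrow> (nat \<Rightarrow> 'v) \<Rightarrow> 'v set" where
  "vset x y a b = {x, y} \<union> fence_V a b"

text \<open>Arc from the vertical set V to the vertical set with vertical pair (x', y').\<close>
definition arc :: "'v trigraph \<Rightarrow> 'v set \<Rightarrow> 'v \<Rightarrow> 'v \<Rightarrow> bool" where
  "arc G V x' y' \<longleftrightarrow> (\<forall>z \<in> V. {x', z} \<in> black G) \<and> (\<forall>z \<in> V. \<not> adjacent G y' z)"

end

theory Submission
  imports Defs
begin


definition AB :: "'v trigraph \<Rightarrow> 'v set \<Rightarrow> 'v set \<Rightarrow> bool" where
  "AB G P Q \<longleftrightarrow> (\<forall>p\<in>P. \<forall>q\<in>Q. {p,q} \<in> black G)"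
definition AN :: "'v trigraph \<Rightarrow> 'v set \<Rightarrow> 'v set \<Rightarrow> bool" where
  "AN G P Q \<longleftrightarrow> (\<forall>p\<in>P. \<forall>q\<in>Q. \<not> adjacent G p q)"

definition Inv :: "'v trigraph \<Rightarrow> 'v set trigraph \<Rightarrow> bool" where
  "Inv G T \<longleftrightarrow> (\<forall>P\<in>verts T. P \<noteq> {} \<and> P \<subseteq> verts G)
     \<and> (\<forall>P\<in>verts T. \<forall>Q\<in>verts T. P \<noteq> Q \<longrightarrow> P \<inter> Q = {})
     \<and> \<Union>(verts T) = verts G
     \<and> (\<forall>e. e \<in> black T \<longleftrightarrow> (\<exists>P Q. e = {P,Q} \<and> P \<in> verts T \<and> Q \<in> verts T \<and> P \<noteq> Q \<and> AB G P Q))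
     \<and> (\<forall>e. e \<in> red T \<longleftrightarrow> (\<exists>P Q. e = {P,Q} \<and> P \<in> verts T \<and> Q \<in> verts T \<and> P \<noteq> Q
              \<and> \<not> AB G P Q \<and> \<not> AN G P Q))"

lemma AB_sym: "AB G P Q = AB G Q P"
  unfolding AB_def by (metis insert_commute)
lemma AN_sym: "AN G P Q = AN G Q P"
  unfolding AN_def adjacent_def by (metis insert_commute)

lemma AB_Un: "AB G (P \<union> Q) Z = (AB G P Z \<and> AB G Q Z)"
  unfolding AB_def by auto
lemma AN_Un: "AN G (P \<union> Q) Z = (AN G P Z \<and> AN G Q Z)"
  unfolding AN_def by auto


lemma InvD:
  assumes "Inv G T"
  shows "\<And>P. P\<in>verts T \<Longrightarrow> P \<noteq> {}" "\<And>P. P\<in>verts T \<Longrightarrow> P \<subseteq> verts G"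
    "\<And>P Q. P\<in>verts T \<Longrightarrow> Q\<in>verts T \<Longrightarrow> P \<noteq> Q \<Longrightarrow> P \<inter> Q = {}"
    "\<Union>(verts T) = verts G"
    "\<And>e. e \<in> black T \<longleftrightarrow> (\<exists>P Q. e = {P,Q} \<and> P \<in> verts T \<and> Q \<in> verts T \<and> P \<noteq> Q \<and> AB G P Q)"
    "\<And>e. e \<in> red T \<longleftrightarrow> (\<exists>P Q. e = {P,Q} \<and> P \<in> verts T \<and> Q \<in> verts T \<and> P \<noteq> Q
              \<and> \<not> AB G P Q \<and> \<not> AN G P Q)"
  using assms unfolding Inv_def by simp_all


lemma Inv_black:
  assumes "Inv G T" "P \<in> verts T" "Q \<in> verts T" "P \<noteq> Q"
  shows "{P,Q} \<in> black T \<longleftrightarrow> AB G P Q"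
proof
  assume "{P,Q} \<in> black T"
  then obtain P' Q' where "{P,Q} = {P',Q'}" "AB G P' Q'" using InvD(5)[OF assms(1), of "{P,Q}"] by auto
  then show "AB G P Q" by (metis AB_sym doubleton_eq_iff)
next
  assume "AB G P Q" then show "{P,Q} \<in> black T" using InvD(5)[OF assms(1), of "{P,Q}"] assms by auto
qed

lemma Inv_red:
  assumes "Inv G T" "P \<in> verts T" "Q \<in> verts T" "P \<noteq> Q"
  shows "{P,Q} \<in> red T \<longleftrightarrow> \<not> AB G P Q \<and> \<not> AN G P Q"
proof
  assume "{P,Q} \<in> red T"
  then obtain P' Q' where "{P,Q} = {P',Q'}" "\<not> AB G P' Q'" "\<not> AN G P' Q'" using InvD(6)[OF assms(1), of "{P,Q}"] by auto
  then show "\<not> AB G P Q \<and> \<not> AN G P Q" by (metis AB_sym AN_sym doubleton_eq_iff)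
next
  assume "\<not> AB G P Q \<and> \<not> AN G P Q" then show "{P,Q} \<in> red T" using InvD(6)[OF assms(1), of "{P,Q}"] assms by auto
qed

lemma AB_AN:
  assumes "P \<noteq> {}" "Q \<noteq> {}" "AB G P Q" shows "\<not> AN G P Q"
  using assms unfolding AB_def AN_def adjacent_def by blast

lemma Inv_adj:
  assumes "Inv G T" "P \<in> verts T" "Q \<in> verts T" "P \<noteq> Q"
  shows "adjacent T P Q \<longleftrightarrow> \<not> AN G P Q"
proof -
  have ne: "P \<noteq> {}" "Q \<noteq> {}" using InvD(1)[OF assms(1)] assms(2,3) by auto
  show ?thesis unfolding adjacent_def using Inv_black[OF assms] Inv_red[OF assms] AB_AN[OF ne]
    by blast
qed


lemma wf_edge:
  assumes "wf_trigraph G" "{p,q} \<in> black G \<or> {p,q} \<in> red G"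
  shows "p \<in> verts G \<and> q \<in> verts G \<and> p \<noteq> q"
proof -
  have "{p,q} \<in> {{p, q} | p q. p \<in> verts G \<and> q \<in> verts G \<and> p \<noteq> q}"
    using assms unfolding wf_trigraph_def by blast
  then obtain p' q' where "{p,q} = {p',q'}" "p' \<in> verts G" "q' \<in> verts G" "p' \<noteq> q'" by blast
  then show ?thesis by (auto simp: doubleton_eq_iff)
qed

lemma wf_disj: "wf_trigraph G \<Longrightarrow> e \<in> black G \<Longrightarrow> e \<notin> red G"
  unfolding wf_trigraph_def by blast

lemma Inv_lift:
  assumes "wf_trigraph G"
  shows "Inv G (lift G)"
proof -
  have ABs: "AB G {p} {q} \<longleftrightarrow> {p,q} \<in> black G" for p q unfolding AB_def by auto
  have ANs: "AN G {p} {q} \<longleftrightarrow> \<not> adjacent G p q" for p q unfolding AN_def by auto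
  have vl: "verts (lift G) = (\<lambda>p. {p}) ` verts G" by (simp add: lift_def)
  have 1: "e \<in> black (lift G) \<longleftrightarrow> (\<exists>P Q. e = {P,Q} \<and> P \<in> verts (lift G) \<and> Q \<in> verts (lift G) \<and> P \<noteq> Q \<and> AB G P Q)" for e
  proof
    assume "e \<in> black (lift G)"
    then obtain p q where e: "e = {{p},{q}}" "{p,q} \<in> black G" unfolding lift_def by auto
    then have "p \<in> verts G" "q \<in> verts G" "p \<noteq> q" using wf_edge[OF assms] by blast+
    then show "\<exists>P Q. e = {P,Q} \<and> P \<in> verts (lift G) \<and> Q \<in> verts (lift G) \<and> P \<noteq> Q \<and> AB G P Q"
      using e ABs vl by (intro exI[of _ "{p}"] exI[of _ "{q}"]) auto
  next
    assume "\<exists>P Q. e = {P,Q} \<and> P \<in> verts (lift G) \<and> Q \<in> verts (lift G) \<and> P \<noteq> Q \<and> AB G P Q"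
    then obtain p q where "e = {{p},{q}}" "AB G {p} {q}" unfolding vl by auto
    then show "e \<in> black (lift G)" using ABs unfolding lift_def by auto
  qed
  have 2: "e \<in> red (lift G) \<longleftrightarrow> (\<exists>P Q. e = {P,Q} \<and> P \<in> verts (lift G) \<and> Q \<in> verts (lift G) \<and> P \<noteq> Q \<and> \<not> AB G P Q \<and> \<not> AN G P Q)" for e
  proof
    assume "e \<in> red (lift G)"
    then obtain p q where e: "e = {{p},{q}}" "{p,q} \<in> red G" unfolding lift_def by auto
    then have "p \<in> verts G" "q \<in> verts G" "p \<noteq> q" using wf_edge[OF assms] by blast+
    moreover have "{p,q} \<notin> black G" using e wf_disj[OF assms] by auto
    ultimately show "\<exists>P Q. e = {P,Q} \<and> P \<in> verts (lift G) \<and> Q \<in> verts (lift G) \<and> P \<noteq> Q \<and> \<not> AB G P Q \<and> \<not> AN G P Q"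
      using e ABs ANs vl unfolding adjacent_def by (intro exI[of _ "{p}"] exI[of _ "{q}"]) auto
  next
    assume "\<exists>P Q. e = {P,Q} \<and> P \<in> verts (lift G) \<and> Q \<in> verts (lift G) \<and> P \<noteq> Q \<and> \<not> AB G P Q \<and> \<not> AN G P Q"
    then obtain p q where "e = {{p},{q}}" "\<not> AB G {p} {q}" "\<not> AN G {p} {q}" unfolding vl by auto
    then show "e \<in> red (lift G)" using ABs ANs unfolding lift_def adjacent_def by auto
  qed
  have 3: "\<Union>(verts (lift G)) = verts G" unfolding vl by auto
  show ?thesis unfolding Inv_def using 1 2 3 vl by auto
qed


lemma Inv_contract:
  assumes I: "Inv G T" and P: "P \<in> verts T" and Q: "Q \<in> verts T" and PQ: "P \<noteq> Q"
  shows "Inv G (contract T P Q (P \<union> Q))"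
proof -
  let ?M = "P \<union> Q"
  let ?T = "contract T P Q ?M"
  have vT: "verts ?T = (verts T - {P,Q}) \<union> {?M}" by (simp add: contract_def)
  have neP: "P \<noteq> {}" and neQ: "Q \<noteq> {}" using InvD(1)[OF I] P Q by auto
  have Mnot: "?M \<notin> verts T - {P,Q}"
  proof
    assume "?M \<in> verts T - {P,Q}"
    then have "?M \<in> verts T" "?M \<noteq> P" by auto
    then have "?M \<inter> P = {}" using InvD(3)[OF I] P by blast
    then show False using neP by auto
  qed
  have Mz: "z \<in> verts T - {P,Q} \<Longrightarrow> z \<noteq> ?M" for z using Mnot by auto
  have part1: "\<forall>R\<in>verts ?T. R \<noteq> {} \<and> R \<subseteq> verts G"
    using InvD(1,2)[OF I] P Q neP unfolding vT by auto
  have part2: "\<forall>R\<in>verts ?T. \<forall>S\<in>verts ?T. R \<noteq> S \<longrightarrow> R \<inter> S = {}"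
  proof (intro ballI impI)
    fix R S assume R: "R \<in> verts ?T" and S: "S \<in> verts ?T" and RS: "R \<noteq> S"
    have d: "\<And>X Y. X \<in> verts T \<Longrightarrow> Y \<in> verts T \<Longrightarrow> X \<noteq> Y \<Longrightarrow> X \<inter> Y = {}" using InvD(3)[OF I] by blast
    show "R \<inter> S = {}"
    proof (cases "R = ?M")
      case True
      then have "S \<in> verts T" "S \<noteq> P" "S \<noteq> Q" using S RS unfolding vT by auto
      then show ?thesis using True d[OF P] d[OF Q] by auto
    next
      case False
      then have R': "R \<in> verts T" "R \<noteq> P" "R \<noteq> Q" using R unfolding vT by auto
      show ?thesis
      proof (cases "S = ?M")
        case True
        then show ?thesis using R' d[OF P R'(1)] d[OF Q R'(1)] by auto
      next
        case False
        then have "S \<in> verts T" using S unfolding vT by auto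
        then show ?thesis using d R'(1) RS by blast
      qed
    qed
  qed
  have part3: "\<Union>(verts ?T) = verts G"
    using InvD(4)[OF I] P Q unfolding vT by auto
  have bT: "black ?T = {e \<in> black T. P \<notin> e \<and> Q \<notin> e}
               \<union> {{?M, z} | z. z \<in> verts T - {P, Q} \<and> {P, z} \<in> black T \<and> {Q, z} \<in> black T}"
    by (simp add: contract_def)
  have rT: "red ?T = {e \<in> red T. P \<notin> e \<and> Q \<notin> e}
               \<union> {{?M, z} | z. z \<in> verts T - {P, Q}
                    \<and> \<not> ({P, z} \<in> black T \<and> {Q, z} \<in> black T)
                    \<and> \<not> (\<not> adjacent T P z \<and> \<not> adjacent T Q z)}"
    by (simp add: contract_def)
  have zP: "z \<in> verts T - {P,Q} \<Longrightarrow> z \<in> verts T \<and> P \<noteq> z \<and> Q \<noteq> z" for z by auto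
  have b2: "z \<in> verts T - {P,Q} \<Longrightarrow> ({P, z} \<in> black T \<and> {Q, z} \<in> black T) \<longleftrightarrow> AB G ?M z" for z
  proof -
    assume "z \<in> verts T - {P,Q}"
    then have "z \<in> verts T" "P \<noteq> z" "Q \<noteq> z" by auto
    then show ?thesis by (simp add: Inv_black[OF I P] Inv_black[OF I Q] AB_Un)
  qed
  have r2: "z \<in> verts T - {P,Q} \<Longrightarrow> (\<not> ({P, z} \<in> black T \<and> {Q, z} \<in> black T)
                    \<and> \<not> (\<not> adjacent T P z \<and> \<not> adjacent T Q z)) \<longleftrightarrow> \<not> AB G ?M z \<and> \<not> AN G ?M z" for z
  proof -
    assume "z \<in> verts T - {P,Q}"
    then have "z \<in> verts T" "P \<noteq> z" "Q \<noteq> z" by auto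
    then show ?thesis by (simp add: Inv_black[OF I P] Inv_black[OF I Q] AB_Un Inv_adj[OF I P] Inv_adj[OF I Q] AN_Un)
  qed
  have old_b: "(e \<in> black T \<and> P \<notin> e \<and> Q \<notin> e) \<longleftrightarrow>
     (\<exists>R S. e = {R,S} \<and> R \<in> verts T - {P,Q} \<and> S \<in> verts T - {P,Q} \<and> R \<noteq> S \<and> AB G R S)" for e
  proof
    assume a: "e \<in> black T \<and> P \<notin> e \<and> Q \<notin> e"
    then obtain R S where "e = {R,S}" "R \<in> verts T" "S \<in> verts T" "R \<noteq> S" "AB G R S"
      using InvD(5)[OF I, of e] by blast
    then show "\<exists>R S. e = {R,S} \<and> R \<in> verts T - {P,Q} \<and> S \<in> verts T - {P,Q} \<and> R \<noteq> S \<and> AB G R S"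
      using a by blast
  next
    assume "\<exists>R S. e = {R,S} \<and> R \<in> verts T - {P,Q} \<and> S \<in> verts T - {P,Q} \<and> R \<noteq> S \<and> AB G R S"
    then obtain R S where r: "e = {R,S}" "R \<in> verts T - {P,Q}" "S \<in> verts T - {P,Q}" "R \<noteq> S" "AB G R S" by blast
    then have "e \<in> black T" using InvD(5)[OF I, of e] by blast
    then show "e \<in> black T \<and> P \<notin> e \<and> Q \<notin> e" using r by blast
  qed
  have old_r: "(e \<in> red T \<and> P \<notin> e \<and> Q \<notin> e) \<longleftrightarrow>
     (\<exists>R S. e = {R,S} \<and> R \<in> verts T - {P,Q} \<and> S \<in> verts T - {P,Q} \<and> R \<noteq> S \<and> \<not> AB G R S \<and> \<not> AN G R S)" for e
  proof
    assume a: "e \<in> red T \<and> P \<notin> e \<and> Q \<notin> e"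
    then obtain R S where "e = {R,S}" "R \<in> verts T" "S \<in> verts T" "R \<noteq> S" "\<not> AB G R S" "\<not> AN G R S"
      using InvD(6)[OF I, of e] by blast
    then show "\<exists>R S. e = {R,S} \<and> R \<in> verts T - {P,Q} \<and> S \<in> verts T - {P,Q} \<and> R \<noteq> S \<and> \<not> AB G R S \<and> \<not> AN G R S"
      using a by blast
  next
    assume "\<exists>R S. e = {R,S} \<and> R \<in> verts T - {P,Q} \<and> S \<in> verts T - {P,Q} \<and> R \<noteq> S \<and> \<not> AB G R S \<and> \<not> AN G R S"
    then obtain R S where r: "e = {R,S}" "R \<in> verts T - {P,Q}" "S \<in> verts T - {P,Q}" "R \<noteq> S" "\<not> AB G R S" "\<not> AN G R S" by blast
    then have "e \<in> red T" using InvD(6)[OF I, of e] by blast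
    then show "e \<in> red T \<and> P \<notin> e \<and> Q \<notin> e" using r by blast
  qed
  have part4: "e \<in> black ?T \<longleftrightarrow> (\<exists>R S. e = {R,S} \<and> R \<in> verts ?T \<and> S \<in> verts ?T \<and> R \<noteq> S \<and> AB G R S)" for e
  proof
    assume "e \<in> black ?T"
    then have "(e \<in> black T \<and> P \<notin> e \<and> Q \<notin> e) \<or> (\<exists>z. e = {?M, z} \<and> z \<in> verts T - {P,Q} \<and> {P, z} \<in> black T \<and> {Q, z} \<in> black T)"
      unfolding bT by blast
    then show "\<exists>R S. e = {R,S} \<and> R \<in> verts ?T \<and> S \<in> verts ?T \<and> R \<noteq> S \<and> AB G R S"
    proof
      assume "e \<in> black T \<and> P \<notin> e \<and> Q \<notin> e"
      then obtain R S where "e = {R,S}" "R \<in> verts T - {P,Q}" "S \<in> verts T - {P,Q}" "R \<noteq> S" "AB G R S"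
        unfolding old_b by blast
      then show ?thesis unfolding vT by blast
    next
      assume "\<exists>z. e = {?M, z} \<and> z \<in> verts T - {P,Q} \<and> {P, z} \<in> black T \<and> {Q, z} \<in> black T"
      then obtain z where z: "e = {?M, z}" "z \<in> verts T - {P,Q}" "{P, z} \<in> black T \<and> {Q, z} \<in> black T" by blast
      then have "AB G ?M z" using b2[OF z(2)] by blast
      then show ?thesis unfolding vT using z Mz[OF z(2)] by blast
    qed
  next
    assume "\<exists>R S. e = {R,S} \<and> R \<in> verts ?T \<and> S \<in> verts ?T \<and> R \<noteq> S \<and> AB G R S"
    then obtain R S where e: "e = {R,S}" "R \<in> verts ?T" "S \<in> verts ?T" "R \<noteq> S" "AB G R S" by blast
    show "e \<in> black ?T"
    proof (cases "R = ?M")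
      case True
      then have S: "S \<in> verts T - {P,Q}" using e unfolding vT by auto
      have "{P, S} \<in> black T \<and> {Q, S} \<in> black T" using b2[OF S] e True by blast
      then show ?thesis unfolding bT using e True S by blast
    next
      case False
      show ?thesis
      proof (cases "S = ?M")
        case True
        then have R: "R \<in> verts T - {P,Q}" using e unfolding vT by auto
        moreover have "AB G ?M R" using e True AB_sym by metis
        ultimately have "{P, R} \<in> black T \<and> {Q, R} \<in> black T" using b2[OF R] by blast
        moreover have "e = {?M, R}" using e True by (simp add: insert_commute)
        ultimately show ?thesis unfolding bT using R by blast
      next
        case False
        then have "R \<in> verts T - {P,Q}" "S \<in> verts T - {P,Q}" using e \<open>R \<noteq> ?M\<close> unfolding vT by auto
        then have "e \<in> black T \<and> P \<notin> e \<and> Q \<notin> e" unfolding old_b using e by blast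
        then show ?thesis unfolding bT by blast
      qed
    qed
  qed
  have part5: "e \<in> red ?T \<longleftrightarrow> (\<exists>R S. e = {R,S} \<and> R \<in> verts ?T \<and> S \<in> verts ?T \<and> R \<noteq> S \<and> \<not> AB G R S \<and> \<not> AN G R S)" for e
  proof
    assume "e \<in> red ?T"
    then have "(e \<in> red T \<and> P \<notin> e \<and> Q \<notin> e) \<or> (\<exists>z. e = {?M, z} \<and> z \<in> verts T - {P,Q} \<and> \<not> ({P, z} \<in> black T \<and> {Q, z} \<in> black T)
                    \<and> \<not> (\<not> adjacent T P z \<and> \<not> adjacent T Q z))"
      unfolding rT by blast
    then show "\<exists>R S. e = {R,S} \<and> R \<in> verts ?T \<and> S \<in> verts ?T \<and> R \<noteq> S \<and> \<not> AB G R S \<and> \<not> AN G R S"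
    proof
      assume "e \<in> red T \<and> P \<notin> e \<and> Q \<notin> e"
      then obtain R S where "e = {R,S}" "R \<in> verts T - {P,Q}" "S \<in> verts T - {P,Q}" "R \<noteq> S" "\<not> AB G R S" "\<not> AN G R S"
        unfolding old_r by blast
      then show ?thesis unfolding vT by blast
    next
      assume "\<exists>z. e = {?M, z} \<and> z \<in> verts T - {P,Q} \<and> \<not> ({P, z} \<in> black T \<and> {Q, z} \<in> black T)
                    \<and> \<not> (\<not> adjacent T P z \<and> \<not> adjacent T Q z)"
      then obtain z where z: "e = {?M, z}" "z \<in> verts T - {P,Q}" "\<not> ({P, z} \<in> black T \<and> {Q, z} \<in> black T)
                    \<and> \<not> (\<not> adjacent T P z \<and> \<not> adjacent T Q z)" by blast
      then have "\<not> AB G ?M z \<and> \<not> AN G ?M z" using r2[OF z(2)] by blast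
      then show ?thesis unfolding vT using z Mz[OF z(2)] by blast
    qed
  next
    assume "\<exists>R S. e = {R,S} \<and> R \<in> verts ?T \<and> S \<in> verts ?T \<and> R \<noteq> S \<and> \<not> AB G R S \<and> \<not> AN G R S"
    then obtain R S where e: "e = {R,S}" "R \<in> verts ?T" "S \<in> verts ?T" "R \<noteq> S" "\<not> AB G R S" "\<not> AN G R S" by blast
    show "e \<in> red ?T"
    proof (cases "R = ?M")
      case True
      then have S: "S \<in> verts T - {P,Q}" using e unfolding vT by auto
      have "\<not> ({P, S} \<in> black T \<and> {Q, S} \<in> black T) \<and> \<not> (\<not> adjacent T P S \<and> \<not> adjacent T Q S)"
        using r2[OF S] e True by blast
      then show ?thesis unfolding rT using e True S by blast
    next
      case False
      show ?thesis
      proof (cases "S = ?M")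
        case True
        then have R: "R \<in> verts T - {P,Q}" using e unfolding vT by auto
        moreover have "\<not> AB G ?M R \<and> \<not> AN G ?M R" using e True AB_sym AN_sym by metis
        ultimately have "\<not> ({P, R} \<in> black T \<and> {Q, R} \<in> black T) \<and> \<not> (\<not> adjacent T P R \<and> \<not> adjacent T Q R)"
          using r2[OF R] by blast
        moreover have "e = {?M, R}" using e True by (simp add: insert_commute)
        ultimately show ?thesis unfolding rT using R by blast
      next
        case False
        then have "R \<in> verts T - {P,Q}" "S \<in> verts T - {P,Q}" using e \<open>R \<noteq> ?M\<close> unfolding vT by auto
        then have "e \<in> red T \<and> P \<notin> e \<and> Q \<notin> e" unfolding old_r using e by blast
        then show ?thesis unfolding rT by blast
      qed
    qed
  qed
  show ?thesis unfolding Inv_def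
    apply (intro conjI)
    using part1 part2 part3 apply (blast, blast, blast)
    using part4 apply blast
    using part5 apply blast
    done
qed


lemma trig_seq_len: "length (trig_seq T cs) = Suc (length cs)"
proof (induction cs arbitrary: T)
  case Nil then show ?case by simp
next
  case (Cons c cs) then show ?case by (cases c) simp
qed

lemma trig_seq_0: "trig_seq T cs ! 0 = T"
  by (cases cs) (auto)

lemma trig_seq_Suc: "t < length cs \<Longrightarrow> trig_seq T cs ! Suc t =
   contract (trig_seq T cs ! t) (fst (cs!t)) (snd (cs!t)) (fst (cs!t) \<union> snd (cs!t))"
proof (induction cs arbitrary: T t)
  case Nil then show ?case by simp
next
  case (Cons c cs)
  obtain u v where c: "c = (u,v)" by (cases c)
  show ?case
  proof (cases t)
    case 0 then show ?thesis using c by (simp add: trig_seq_0)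
  next
    case (Suc t') then show ?thesis using c Cons by simp
  qed
qed

definition mixedM :: "'v trigraph \<Rightarrow> 'v set \<Rightarrow> 'v \<Rightarrow> bool" where
  "mixedM G M w \<longleftrightarrow> (\<exists>m\<in>M. {m,w} \<in> red G) \<or> (\<exists>m1\<in>M. \<exists>m2\<in>M. {m1,w} \<in> black G \<and> \<not> adjacent G m2 w)"

lemma Inv_part:
  assumes "Inv G T" "w \<in> verts G"
  shows "\<exists>!R. R \<in> verts T \<and> w \<in> R"
proof -
  obtain R where "R \<in> verts T" "w \<in> R" using InvD(4)[OF assms(1)] assms(2) by blast
  moreover have "\<And>S. S \<in> verts T \<Longrightarrow> w \<in> S \<Longrightarrow> S = R"
    using InvD(3)[OF assms(1)] calculation by blast
  ultimately show ?thesis by blast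
qed

lemma red_deg_ge5:
  assumes wf: "wf_trigraph G" and I: "Inv G T" and M: "M \<in> verts T"
    and W: "W \<subseteq> verts G" "W \<inter> M = {}" "5 \<le> card W"
    and mix: "\<forall>w\<in>W. mixedM G M w"
    and sp: "\<forall>R\<in>verts T. \<forall>u\<in>W. \<forall>v\<in>W. u \<in> R \<and> v \<in> R \<longrightarrow> u = v"
  shows "5 \<le> red_deg T M"
proof -
  define f where "f w = (THE R. R \<in> verts T \<and> w \<in> R)" for w
  have fw: "w \<in> W \<Longrightarrow> f w \<in> verts T \<and> w \<in> f w" for w
  proof -
    assume "w \<in> W"
    then have "\<exists>!R. R \<in> verts T \<and> w \<in> R" using Inv_part[OF I, of w] W(1) by blast
    then show ?thesis unfolding f_def by (rule theI')
  qed
  have inj: "inj_on f W"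
  proof (rule inj_onI)
    fix u v assume "u \<in> W" "v \<in> W" "f u = f v"
    then show "u = v" using fw[of u] fw[of v] sp by metis
  qed
  have fin: "finite (verts T)"
  proof -
    have "verts T \<subseteq> Pow (verts G)" using InvD(2)[OF I] by blast
    moreover have "finite (verts G)" using wf unfolding wf_trigraph_def by blast
    ultimately show ?thesis using finite_subset by blast
  qed
  have sub: "f ` W \<subseteq> {z \<in> verts T. {M, z} \<in> red T}"
  proof
    fix z assume "z \<in> f ` W"
    then obtain w where w: "w \<in> W" "z = f w" by blast
    then have z: "z \<in> verts T" "w \<in> z" using fw by auto
    have "z \<noteq> M" using z W(2) w(1) by blast
    have nAB: "\<not> AB G M z" and nAN: "\<not> AN G M z"
    proof -
      from mix w(1) have "mixedM G M w" by blast
      then consider m where "m \<in> M" "{m,w} \<in> red G" | m1 m2 where "m1 \<in> M" "m2 \<in> M" "{m1,w} \<in> black G" "\<not> adjacent G m2 w"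
        unfolding mixedM_def by blast
      then have "\<not> AB G M z \<and> \<not> AN G M z"
      proof cases
        case 1
        then have "{m,w} \<notin> black G" using wf_disj[OF wf] by blast
        then show ?thesis using 1 z(2) unfolding AB_def AN_def adjacent_def by blast
      next
        case 2
        then have "{m2,w} \<notin> black G" unfolding adjacent_def by blast
        then show ?thesis using 2 z(2) unfolding AB_def AN_def adjacent_def by blast
      qed
      then show "\<not> AB G M z" "\<not> AN G M z" by auto
    qed
    have "{M, z} \<in> red T" using Inv_red[OF I M z(1) \<open>z \<noteq> M\<close>[symmetric]] nAB nAN by blast
    then show "z \<in> {z \<in> verts T. {M, z} \<in> red T}" using z by blast
  qed
  have "card W = card (f ` W)" using card_image[OF inj] by simp
  also have "\<dots> \<le> card {z \<in> verts T. {M, z} \<in> red T}"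
    using sub fin by (intro card_mono) auto
  finally show ?thesis using W(3) unfolding red_deg_def by simp
qed


definition FB :: "(nat \<times> nat) list" where
  "FB = [(2,3),(3,4),(4,5),(5,6),(6,7),(7,2),(8,9),(9,10),(10,11),(11,12),(12,13),(13,8),(8,7)]"
definition FR :: "(nat \<times> nat) list" where
  "FR = [(2,8),(3,9),(4,10),(5,11),(6,12),(7,13),(2,9),(3,10),(4,11),(5,12),(6,13)]"
definition SB :: "(nat \<times> nat) list" where
  "SB = [(0,2),(0,3),(0,4),(0,5),(0,6),(0,7),(1,2),(1,3),(1,4),(1,5),(1,6),(1,7)]"

definition isBF :: "nat \<Rightarrow> nat \<Rightarrow> bool" where "isBF i j \<longleftrightarrow> (i,j) \<in> set FB \<or> (j,i) \<in> set FB"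
definition isSB :: "nat \<Rightarrow> nat \<Rightarrow> bool" where "isSB i j \<longleftrightarrow> (i,j) \<in> set SB \<or> (j,i) \<in> set SB"
definition isR :: "nat \<Rightarrow> nat \<Rightarrow> bool" where "isR i j \<longleftrightarrow> (i,j) \<in> set FR \<or> (j,i) \<in> set FR"
definition isN :: "nat \<Rightarrow> nat \<Rightarrow> bool" where
  "isN i j \<longleftrightarrow> i \<noteq> j \<and> \<not> isBF i j \<and> \<not> isSB i j \<and> \<not> isR i j \<and> \<not> (i \<le> 1 \<and> j \<le> 1)"
definition witI :: "nat \<Rightarrow> nat \<Rightarrow> nat \<Rightarrow> bool" where
  "witI i j w \<longleftrightarrow> isR i w \<or> isR j w \<or> ((isBF i w \<or> isSB i w) \<and> isN j w) \<or> (isN i w \<and> (isBF j w \<or> isSB j w))"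

lemma comb_list:
  "list_all (\<lambda>i. list_all (\<lambda>j. i = j \<or> (i \<le> 1 \<and> j \<le> 1) \<or>
     5 \<le> length (filter (\<lambda>w. w \<noteq> i \<and> w \<noteq> j \<and> witI i j w) [0..<14])) [0..<14]) [0..<14]"
  by code_simp

lemma isSB_cases: "i < 14 \<Longrightarrow> j < 14 \<Longrightarrow> isSB i j \<Longrightarrow> (i \<le> 1 \<and> 2 \<le> j \<and> j \<le> 7) \<or> (j \<le> 1 \<and> 2 \<le> i \<and> i \<le> 7)"
proof -
  have "list_all (\<lambda>i. list_all (\<lambda>j. \<not> isSB i j \<or> (i \<le> 1 \<and> 2 \<le> j \<and> j \<le> 7) \<or> (j \<le> 1 \<and> 2 \<le> i \<and> i \<le> 7)) [0..<14]) [0..<14]"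
    by code_simp
  then show "i < 14 \<Longrightarrow> j < 14 \<Longrightarrow> isSB i j \<Longrightarrow> ?thesis" by (auto simp: list_all_iff)
qed

lemma isN_cases: "i < 14 \<Longrightarrow> j < 14 \<Longrightarrow> isN i j \<Longrightarrow>
   (2 \<le> i \<and> 2 \<le> j \<and> \<not> isBF i j \<and> \<not> isR i j) \<or> (i \<le> 1 \<and> 8 \<le> j) \<or> (j \<le> 1 \<and> 8 \<le> i)"
proof -
  have "list_all (\<lambda>i. list_all (\<lambda>j. \<not> isN i j \<or> (2 \<le> i \<and> 2 \<le> j \<and> \<not> isBF i j \<and> \<not> isR i j) \<or> (i \<le> 1 \<and> 8 \<le> j) \<or> (j \<le> 1 \<and> 8 \<le> i)) [0..<14]) [0..<14]"
    by code_simp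
  then show "i < 14 \<Longrightarrow> j < 14 \<Longrightarrow> isN i j \<Longrightarrow> ?thesis" by (auto simp: list_all_iff)
qed

lemma comb:
  assumes "i < 14" "j < 14" "i \<noteq> j" "\<not> (i \<le> 1 \<and> j \<le> 1)"
  shows "5 \<le> card {w. w < 14 \<and> w \<noteq> i \<and> w \<noteq> j \<and> witI i j w}"
proof -
  have "5 \<le> length (filter (\<lambda>w. w \<noteq> i \<and> w \<noteq> j \<and> witI i j w) [0..<14])"
  proof -
    have "\<forall>i\<in>{0..<14}. \<forall>j\<in>{0..<14}. i = j \<or> (i \<le> 1 \<and> j \<le> 1) \<or>
     5 \<le> length (filter (\<lambda>w. w \<noteq> i \<and> w \<noteq> j \<and> witI i j w) [0..<(14::nat)])"
      using comb_list unfolding list_all_iff by simp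
    then have "i = j \<or> (i \<le> 1 \<and> j \<le> 1) \<or>
     5 \<le> length (filter (\<lambda>w. w \<noteq> i \<and> w \<noteq> j \<and> witI i j w) [0..<(14::nat)])"
      using assms(1,2) by simp
    then show ?thesis using assms(3,4) by blast
  qed
  also have "\<dots> = card (set (filter (\<lambda>w. w \<noteq> i \<and> w \<noteq> j \<and> witI i j w) [0..<14]))"
    by (rule distinct_card[symmetric]) simp
  also have "set (filter (\<lambda>w. w \<noteq> i \<and> w \<noteq> j \<and> witI i j w) [0..<14]) = {w. w < 14 \<and> w \<noteq> i \<and> w \<noteq> j \<and> witI i j w}"
    by auto
  finally show ?thesis .
qed


definition gi :: "'v \<Rightarrow> 'v \<Rightarrow> (nat \<Rightarrow> 'v) \<Rightarrow> (nat \<Rightarrow> 'v) \<Rightarrow> nat \<Rightarrow> 'v" where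
  "gi s t a b n = (if n = 0 then s else if n = 1 then t else if n \<le> 7 then a (n - 1) else b (n - 7))"

lemma set16: "{1..6::nat} = {1,2,3,4,5,6}" by (auto simp: atLeastLessThanSuc_atLeastAtMost[symmetric] upt_rec_numeral)
lemma set15: "{1..5::nat} = {1,2,3,4,5}" by (auto simp: atLeastLessThanSuc_atLeastAtMost[symmetric] upt_rec_numeral)
lemma set014: "{0..<14::nat} = {0,1,2,3,4,5,6,7,8,9,10,11,12,13}"
proof -
  have "{0..<14::nat} = set [0..<14]" by simp
  also have "[0..<14::nat] = [0,1,2,3,4,5,6,7,8,9,10,11,12,13]" by code_simp
  finally show ?thesis by simp
qed

lemma vset_img: "vset s t a b = gi s t a b ` {0..<14}"
  unfolding vset_def fence_V_def fence_A_def fence_B_def set16 set014 by (auto simp: gi_def)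

lemma gi_cls:
  assumes "n < 14"
  shows "(n = 0 \<and> gi s t a b n = s) \<or> (n = 1 \<and> gi s t a b n = t)
    \<or> (2 \<le> n \<and> n \<le> 7 \<and> gi s t a b n = a (n - 1) \<and> n - 1 \<in> {1..6})
    \<or> (8 \<le> n \<and> gi s t a b n = b (n - 7) \<and> n - 7 \<in> {1..6})"
  using assms by (auto simp: gi_def)

lemma gi_inj:
  assumes ia: "inj_on a {1..6}" and ib: "inj_on b {1..6}" and ab: "a ` {1..6} \<inter> b ` {1..6} = {}"
    and s: "s \<notin> a ` {1..6} \<union> b ` {1..6}" and t: "t \<notin> a ` {1..6} \<union> b ` {1..6}" and st: "s \<noteq> t"
  shows "inj_on (gi s t a b) {0..<14}"
proof (rule inj_onI)
  fix i j assume i: "i \<in> {0..<14}" and j: "j \<in> {0..<14}" and e: "gi s t a b i = gi s t a b j"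
  from i j have i': "i < 14" and j': "j < 14" by auto
  have ai: "x \<in> {1..6} \<Longrightarrow> y \<in> {1..6} \<Longrightarrow> a x = a y \<Longrightarrow> x = y" for x y using ia by (meson inj_onD)
  have bi: "x \<in> {1..6} \<Longrightarrow> y \<in> {1..6} \<Longrightarrow> b x = b y \<Longrightarrow> x = y" for x y using ib by (meson inj_onD)
  have ab': "x \<in> {1..6} \<Longrightarrow> y \<in> {1..6} \<Longrightarrow> a x \<noteq> b y" for x y using ab by blast
  show "i = j"
    using ab'[of "i-1" "j-7"] ab'[of "j-1" "i-7"] gi_cls[OF i', of s t a b] gi_cls[OF j', of s t a b] e
    apply (elim disjE conjE)
    using ai[of "i-1" "j-1"] bi[of "i-7" "j-7"] ab s t st by auto
qed


lemma c5: "{f i | i. i \<in> {1..5::nat}} = {f 1, f 2, f 3, f 4, f 5}" unfolding set15 by auto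
lemma c6: "{f i | i. i \<in> {1..6::nat}} = {f 1, f 2, f 3, f 4, f 5, f 6}" unfolding set16 by auto

lemma gv:
  "gi s t a b 2 = a 1"
  "gi s t a b 3 = a 2"
  "gi s t a b 4 = a 3"
  "gi s t a b 5 = a 4"
  "gi s t a b 6 = a 5"
  "gi s t a b 7 = a 6"
  "gi s t a b 8 = b 1"
  "gi s t a b 9 = b 2"
  "gi s t a b 10 = b 3"
  "gi s t a b 11 = b 4"
  "gi s t a b 12 = b 5"
  "gi s t a b 13 = b 6"
  by (simp_all add: gi_def)

definition FB2 :: "(nat \<times> nat) list" where
  "FB2 = [(8,7),(13,8),(8,9),(9,10),(10,11),(11,12),(12,13),(7,2),(2,3),(3,4),(4,5),(5,6),(6,7)]"
definition FR2 :: "(nat \<times> nat) list" where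
  "FR2 = [(2,9),(3,10),(4,11),(5,12),(6,13),(2,8),(3,9),(4,10),(5,11),(6,12),(7,13)]"
lemma FB2: "set FB = set FB2" by code_simp
lemma FR2: "set FR = set FR2" by code_simp

lemma fb_img: "fence_black a b = (\<lambda>(k,l). {gi s t a b k, gi s t a b l}) ` set FB"
proof -
  have e1: "{{a i, a (i + 1)} | i. i \<in> {1..5::nat}} = {{a 1, a 2}, {a 2, a 3}, {a 3, a 4}, {a 4, a 5}, {a 5, a 6}}"
    unfolding c5 one_add_one by simp
  have e2: "{{b i, b (i + 1)} | i. i \<in> {1..5::nat}} = {{b 1, b 2}, {b 2, b 3}, {b 3, b 4}, {b 4, b 5}, {b 5, b 6}}"
    unfolding c5 one_add_one by simp
  show ?thesis unfolding fence_black_def e1 e2 FB2 FB2_def by (simp add: gv)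
qed

lemma fr_img: "fence_red a b = (\<lambda>(k,l). {gi s t a b k, gi s t a b l}) ` set FR"
proof -
  have e1: "{{a i, b i} | i. i \<in> {1..6::nat}} = {{a 1, b 1}, {a 2, b 2}, {a 3, b 3}, {a 4, b 4}, {a 5, b 5}, {a 6, b 6}}"
    unfolding c6 by simp
  have e2: "{{a i, b (i + 1)} | i. i \<in> {1..5::nat}} = {{a 1, b 2}, {a 2, b 3}, {a 3, b 4}, {a 4, b 5}, {a 5, b 6}}"
    unfolding c5 one_add_one by simp
  show ?thesis unfolding fence_red_def e1 e2 FR2 FR2_def by (simp add: gv)
qed

lemma dbl:
  assumes inj: "inj_on (gi s t a b) {0..<14}" and "i < 14" "j < 14" "k < 14" "l < 14"
  shows "({gi s t a b i, gi s t a b j} = {gi s t a b k, gi s t a b l}) \<longleftrightarrow> ((i = k \<and> j = l) \<or> (i = l \<and> j = k))"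
  using inj_on_eq_iff[OF inj] assms(2-5) unfolding doubleton_eq_iff by auto

lemma mem_img:
  assumes inj: "inj_on (gi s t a b) {0..<14}" and L: "\<forall>(k,l)\<in>set L. k < 14 \<and> l < 14" and "i < 14" "j < 14"
  shows "{gi s t a b i, gi s t a b j} \<in> (\<lambda>(k,l). {gi s t a b k, gi s t a b l}) ` set L \<longleftrightarrow> (i,j) \<in> set L \<or> (j,i) \<in> set L"
proof
  assume "{gi s t a b i, gi s t a b j} \<in> (\<lambda>(k,l). {gi s t a b k, gi s t a b l}) ` set L"
  then obtain k l where kl: "(k,l) \<in> set L" "{gi s t a b i, gi s t a b j} = {gi s t a b k, gi s t a b l}" by auto
  then have "k < 14" "l < 14" using L by auto
  then have "(i = k \<and> j = l) \<or> (i = l \<and> j = k)" using dbl[OF inj assms(3,4)] kl(2) by blast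
  then show "(i,j) \<in> set L \<or> (j,i) \<in> set L" using kl(1) by blast
next
  assume "(i,j) \<in> set L \<or> (j,i) \<in> set L"
  then show "{gi s t a b i, gi s t a b j} \<in> (\<lambda>(k,l). {gi s t a b k, gi s t a b l}) ` set L"
  proof
    assume "(i,j) \<in> set L" then show ?thesis by force
  next
    assume "(j,i) \<in> set L"
    then have "{gi s t a b j, gi s t a b i} \<in> (\<lambda>(k,l). {gi s t a b k, gi s t a b l}) ` set L" by force
    then show ?thesis by (simp add: insert_commute)
  qed
qed

lemma FB_bd: "\<forall>(k,l)\<in>set FB. k < 14 \<and> l < 14" by (simp add: FB_def)
lemma FR_bd: "\<forall>(k,l)\<in>set FR. k < 14 \<and> l < 14" by (simp add: FR_def)

locale gad =
  fixes G :: "'v trigraph" and s t :: 'v and a b :: "nat \<Rightarrow> 'v"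
  assumes wf: "wf_trigraph G" and att: "attached G a b {s,t}" and st: "s \<noteq> t"
begin

abbreviation "g \<equiv> gi s t a b"

lemma fin: "fence_in G a b" using att unfolding attached_def by blast

lemma stV: "s \<notin> fence_V a b" "t \<notin> fence_V a b" "s \<in> verts G" "t \<in> verts G"
  using att unfolding attached_def by auto

lemma inj: "inj_on g {0..<14}"
  using fin stV(1,2) st unfolding fence_in_def fence_V_def fence_A_def fence_B_def
  by (intro gi_inj) auto

lemma g_V: "2 \<le> n \<Longrightarrow> n < 14 \<Longrightarrow> g n \<in> fence_V a b"
  using gi_cls[of n s t a b] unfolding fence_V_def fence_A_def fence_B_def by auto

lemma g_A: "2 \<le> n \<Longrightarrow> n \<le> 7 \<Longrightarrow> g n \<in> fence_A a"
  using gi_cls[of n s t a b] unfolding fence_A_def by auto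

lemma g_B: "8 \<le> n \<Longrightarrow> n < 14 \<Longrightarrow> g n \<in> fence_B b"
  using gi_cls[of n s t a b] unfolding fence_B_def by auto

lemma g_S: "n \<le> 1 \<Longrightarrow> g n \<in> {s,t}"
  by (auto simp: gi_def)

lemma fb_sub: "fence_black a b \<subseteq> black G" using fin unfolding fence_in_def by blast
lemma fr_sub: "fence_red a b \<subseteq> red G" using fin unfolding fence_in_def by blast

lemma eB: assumes "i < 14" "j < 14" "isBF i j \<or> isSB i j" shows "{g i, g j} \<in> black G"
  using assms(3)
proof
  assume "isBF i j"
  then have "{g i, g j} \<in> fence_black a b"
    unfolding fb_img[of a b s t] mem_img[OF inj FB_bd assms(1,2)] isBF_def .
  then show ?thesis using fb_sub by blast
next
  assume "isSB i j"
  then consider "i \<le> 1" "2 \<le> j" "j \<le> 7" | "j \<le> 1" "2 \<le> i" "i \<le> 7" using isSB_cases assms(1,2) by blast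
  then show ?thesis
  proof cases
    case 1
    then have "{g j, g i} \<in> black G" using att g_A g_S unfolding attached_def by blast
    then show ?thesis by (simp add: insert_commute)
  next
    case 2
    then show ?thesis using att g_A g_S unfolding attached_def by blast
  qed
qed

lemma eR: assumes "i < 14" "j < 14" "isR i j" shows "{g i, g j} \<in> red G"
proof -
  have "{g i, g j} \<in> fence_red a b"
    unfolding fr_img[of a b s t] mem_img[OF inj FR_bd assms(1,2)] using assms(3) isR_def by blast
  then show ?thesis using fr_sub by blast
qed

lemma eN: assumes "i < 14" "j < 14" "isN i j" shows "\<not> adjacent G (g i) (g j)"
proof -
  consider "2 \<le> i" "2 \<le> j" "\<not> isBF i j" "\<not> isR i j" | "i \<le> 1" "8 \<le> j" | "j \<le> 1" "8 \<le> i"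
    using isN_cases[OF assms] by blast
  then show ?thesis
  proof cases
    case 1
    have sub: "{g i, g j} \<subseteq> fence_V a b" using g_V 1 assms by auto
    have nb: "{g i, g j} \<notin> fence_black a b"
      unfolding fb_img[of a b s t] mem_img[OF inj FB_bd assms(1,2)] using 1 isBF_def by blast
    have nr: "{g i, g j} \<notin> fence_red a b"
      unfolding fr_img[of a b s t] mem_img[OF inj FR_bd assms(1,2)] using 1 isR_def by blast
    have "{g i, g j} \<notin> black G" using fin sub nb unfolding fence_in_def by blast
    moreover have "{g i, g j} \<notin> red G" using fin sub nr unfolding fence_in_def by blast
    ultimately show ?thesis unfolding adjacent_def by blast
  next
    case 2
    then have "\<not> adjacent G (g j) (g i)" using att g_B g_S assms unfolding attached_def by blast
    then show ?thesis unfolding adjacent_def by (simp add: insert_commute)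
  next
    case 3
    then show ?thesis using att g_B g_S assms unfolding attached_def by blast
  qed
qed

lemma gadget_witness:
  assumes u: "u \<in> vset s t a b" and v: "v \<in> vset s t a b" and uv: "u \<noteq> v"
    and nst: "\<not> (u \<in> {s,t} \<and> v \<in> {s,t})"
  shows "\<exists>W. W \<subseteq> vset s t a b - {u,v} \<and> 5 \<le> card W \<and> (\<forall>w\<in>W. mixedM G {u,v} w)"
proof -
  obtain i where i: "i < 14" "u = g i" using u unfolding vset_img by auto
  obtain j where j: "j < 14" "v = g j" using v unfolding vset_img by auto
  have ij: "i \<noteq> j" using uv i j by blast
  have nij: "\<not> (i \<le> 1 \<and> j \<le> 1)" using nst i j g_S by blast
  define I where "I = {w. w < 14 \<and> w \<noteq> i \<and> w \<noteq> j \<and> witI i j w}"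
  have c: "5 \<le> card I" unfolding I_def by (rule comb[OF i(1) j(1) ij nij])
  have Isub: "I \<subseteq> {0..<14}" unfolding I_def by auto
  have "card (g ` I) = card I" using inj_on_subset[OF inj Isub] by (rule card_image)
  moreover have "g ` I \<subseteq> vset s t a b - {u,v}"
  proof
    fix z assume "z \<in> g ` I"
    then obtain w where w: "w \<in> I" "z = g w" by blast
    then have "w < 14" "w \<noteq> i" "w \<noteq> j" unfolding I_def by auto
    then have "g w \<noteq> g i" "g w \<noteq> g j" using inj_on_eq_iff[OF inj] i(1) j(1) by auto
    then show "z \<in> vset s t a b - {u,v}" using w \<open>w < 14\<close> i j unfolding vset_img by auto
  qed
  moreover have "\<forall>z\<in>g ` I. mixedM G {u,v} z"
  proof
    fix z assume "z \<in> g ` I"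
    then obtain w where w: "w \<in> I" "z = g w" by blast
    then have w14: "w < 14" and wit: "witI i j w" unfolding I_def by auto
    from wit consider "isR i w" | "isR j w" | "isBF i w \<or> isSB i w" "isN j w" | "isN i w" "isBF j w \<or> isSB j w"
      unfolding witI_def by blast
    then show "mixedM G {u,v} z"
    proof cases
      case 1 then show ?thesis using eR[OF i(1) w14] i j w unfolding mixedM_def by blast
    next
      case 2 then show ?thesis using eR[OF j(1) w14] i j w unfolding mixedM_def by blast
    next
      case 3 then show ?thesis using eB[OF i(1) w14] eN[OF j(1) w14] i j w unfolding mixedM_def by blast
    next
      case 4 then show ?thesis using eB[OF j(1) w14] eN[OF i(1) w14] i j w unfolding mixedM_def by blast
    qed
  qed
  ultimately show ?thesis using c by (intro exI[of _ "g ` I"]) auto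
qed

end


definition spreadT :: "'v set trigraph \<Rightarrow> 'v set \<Rightarrow> bool" where
  "spreadT T V \<longleftrightarrow> (\<forall>R\<in>verts T. \<forall>u\<in>V. \<forall>v\<in>V. u \<in> R \<and> v \<in> R \<longrightarrow> u = v)"

lemma mixedM_mono: "mixedM G M w \<Longrightarrow> M \<subseteq> M' \<Longrightarrow> mixedM G M' w"
  unfolding mixedM_def by blast

lemma verts_contract: "verts (contract T P Q (P \<union> Q)) = (verts T - {P,Q}) \<union> {P \<union> Q}"
  by (simp add: contract_def)

lemma vset_sub: "attached G a b {s,t} \<Longrightarrow> vset s t a b \<subseteq> verts G"
  unfolding attached_def fence_in_def vset_def by blast

lemma step_gen:
  assumes gd: "gad G s t a b" and I: "Inv G T" and P: "P \<in> verts T" and Q: "Q \<in> verts T" and PQ: "P \<noteq> Q"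
    and sp: "spreadT T (vset s t a b)"
    and md: "max_red_deg_le (contract T P Q (P \<union> Q)) 4"
    and R: "R \<in> verts (contract T P Q (P \<union> Q))"
    and uv: "u \<in> vset s t a b" "v \<in> vset s t a b" "u \<in> R" "v \<in> R" "u \<noteq> v"
  shows "u \<in> {s,t} \<and> v \<in> {s,t}"
proof (rule ccontr)
  assume nst: "\<not> (u \<in> {s,t} \<and> v \<in> {s,t})"
  let ?T = "contract T P Q (P \<union> Q)"
  let ?V = "vset s t a b"
  have wf: "wf_trigraph G" and att: "attached G a b {s,t}" using gd unfolding gad_def by auto
  have I': "Inv G ?T" using Inv_contract[OF I P Q PQ] .
  have RM: "R = P \<union> Q"
  proof (rule ccontr)
    assume "R \<noteq> P \<union> Q"
    then have "R \<in> verts T" using R unfolding verts_contract by auto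
    then show False using sp uv unfolding spreadT_def by blast
  qed
  have VR: "\<And>w. w \<in> ?V \<Longrightarrow> w \<in> R \<Longrightarrow> w = u \<or> w = v"
  proof -
    fix w assume w: "w \<in> ?V" "w \<in> R"
    have spP: "\<And>x y. x \<in> ?V \<Longrightarrow> y \<in> ?V \<Longrightarrow> x \<in> P \<Longrightarrow> y \<in> P \<Longrightarrow> x = y" using sp P unfolding spreadT_def by blast
    have spQ: "\<And>x y. x \<in> ?V \<Longrightarrow> y \<in> ?V \<Longrightarrow> x \<in> Q \<Longrightarrow> y \<in> Q \<Longrightarrow> x = y" using sp Q unfolding spreadT_def by blast
    show "w = u \<or> w = v" using w uv RM spP spQ by blast
  qed
  obtain W where W: "W \<subseteq> ?V - {u,v}" "5 \<le> card W" "\<forall>w\<in>W. mixedM G {u,v} w"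
    using gad.gadget_witness[OF gd uv(1,2,5) nst] by blast
  have WR: "W \<inter> R = {}" using W(1) VR by blast
  have WG: "W \<subseteq> verts G" using W(1) vset_sub[OF att] by blast
  have mix: "\<forall>w\<in>W. mixedM G R w" using W(3) uv(3,4) mixedM_mono[of G "{u,v}" _ R] by blast
  have spW: "\<forall>R'\<in>verts ?T. \<forall>w1\<in>W. \<forall>w2\<in>W. w1 \<in> R' \<and> w2 \<in> R' \<longrightarrow> w1 = w2"
  proof (intro ballI impI)
    fix R' w1 w2 assume R': "R' \<in> verts ?T" and w: "w1 \<in> W" "w2 \<in> W" "w1 \<in> R' \<and> w2 \<in> R'"
    have "R' \<noteq> R" using w WR by blast
    then have "R' \<in> verts T" using R' RM unfolding verts_contract by auto
    then show "w1 = w2" using sp w W(1) unfolding spreadT_def by blast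
  qed
  have "5 \<le> red_deg ?T R" by (rule red_deg_ge5[OF wf I' R WG WR W(2) mix spW])
  moreover have "red_deg ?T R \<le> 4" using md R unfolding max_red_deg_le_def by blast
  ultimately show False by simp
qed

lemma card_vset:
  assumes att: "attached G a b {s,t}"
  shows "6 \<le> card (vset s t a b)" "finite (vset s t a b)"
proof -
  have ia: "inj_on a {1..6}" using att unfolding attached_def fence_in_def by blast
  have fin: "finite (vset s t a b)" unfolding vset_def fence_V_def fence_A_def fence_B_def by simp
  have "card (fence_A a) = 6" unfolding fence_A_def using card_image[OF ia] by simp
  moreover have "fence_A a \<subseteq> vset s t a b" unfolding vset_def fence_V_def by blast
  ultimately show "6 \<le> card (vset s t a b)" using card_mono[OF fin] by metis
  show "finite (vset s t a b)" using fin .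
qed

lemma xy_case:
  assumes wf: "wf_trigraph G" and I: "Inv G T" and att: "attached G a b {s,t}"
    and sp: "spreadT T (vset s t a b)" and R: "R \<in> verts T" and xy: "x' \<in> R" "y' \<in> R"
    and ar: "arc G (vset s t a b) x' y'"
  shows "5 \<le> red_deg T R"
proof -
  let ?V = "vset s t a b"
  define W where "W = ?V - R"
  have fin: "finite ?V" and c6: "6 \<le> card ?V" using card_vset[OF att] by auto
  have "card (?V \<inter> R) \<le> Suc 0"
    using sp R unfolding spreadT_def by (subst card_le_Suc0_iff_eq) (use fin in auto)
  moreover have "card W = card ?V - card (?V \<inter> R)" unfolding W_def
    using fin by (simp add: card_Diff_subset_Int)
  ultimately have cW: "5 \<le> card W" using c6 by simp
  have WG: "W \<subseteq> verts G" unfolding W_def using vset_sub[OF att] by blast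
  have WR: "W \<inter> R = {}" unfolding W_def by blast
  have mix: "\<forall>w\<in>W. mixedM G R w"
    using ar xy unfolding W_def arc_def mixedM_def by blast
  have spW: "\<forall>R'\<in>verts T. \<forall>w1\<in>W. \<forall>w2\<in>W. w1 \<in> R' \<and> w2 \<in> R' \<longrightarrow> w1 = w2"
    using sp unfolding spreadT_def W_def by blast
  show ?thesis by (rule red_deg_ge5[OF wf I R WG WR cW mix spW])
qed


lemma Ts_len: "length (seq_trigraphs G cs) = Suc (length cs)"
  unfolding seq_trigraphs_def by (rule trig_seq_len)

lemma Ts_Suc: "t < length cs \<Longrightarrow> seq_trigraphs G cs ! Suc t =
   contract (seq_trigraphs G cs ! t) (fst (cs!t)) (snd (cs!t)) (fst (cs!t) \<union> snd (cs!t))"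
  unfolding seq_trigraphs_def by (rule trig_seq_Suc)

lemma Ts_0: "seq_trigraphs G cs ! 0 = lift G"
  unfolding seq_trigraphs_def by (rule trig_seq_0)

lemma Inv_Ts:
  assumes wf: "wf_trigraph G" and pd: "partial_d_sequence G d cs"
  shows "t \<le> length cs \<Longrightarrow> Inv G (seq_trigraphs G cs ! t)"
proof (induction t)
  case 0 then show ?case using Inv_lift[OF wf] by (simp add: Ts_0)
next
  case (Suc t)
  then have t: "t < length cs" by simp
  have "fst (cs ! t) \<in> verts (seq_trigraphs G cs ! t)" "snd (cs ! t) \<in> verts (seq_trigraphs G cs ! t)"
       "fst (cs ! t) \<noteq> snd (cs ! t)" using pd t unfolding partial_d_sequence_def by auto
  then show ?case using Inv_contract[OF Suc.IH[OF less_imp_le[OF t]]] Ts_Suc[OF t] by simp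
qed

lemma md_Ts:
  assumes pd: "partial_d_sequence G d cs" and t: "t \<le> length cs"
  shows "max_red_deg_le (seq_trigraphs G cs ! t) d"
proof -
  have "seq_trigraphs G cs ! t \<in> set (seq_trigraphs G cs)" using t Ts_len[of G cs] by simp
  then show ?thesis using pd unfolding partial_d_sequence_def by blast
qed

lemma main_ind:
  fixes G :: "'v trigraph"
    and x y x' y' :: 'v and a b a' b' :: "nat \<Rightarrow> 'v"
    and cs :: "('v set \<times> 'v set) list"
  assumes wf: "wf_trigraph G"
    and vj: "vertical_set G x y a b"
    and vj': "vertical_set G x' y' a' b'"
    and ar: "arc G (vset x y a b) x' y'"
    and pd: "partial_d_sequence G 4 cs"
  shows "t \<le> length cs \<Longrightarrow> (\<forall>k<t. \<not> involves (cs ! k) x y) \<Longrightarrow>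
     spreadT (seq_trigraphs G cs ! t) (vset x y a b) \<and> spreadT (seq_trigraphs G cs ! t) (vset x' y' a' b')
     \<and> \<not> (\<exists>R\<in>verts (seq_trigraphs G cs ! t). x \<in> R \<and> y \<in> R)"
proof (induction t)
  case 0
  have xy: "x \<noteq> y" using vj unfolding vertical_set_def by blast
  have "verts (seq_trigraphs G cs ! 0) = (\<lambda>p. {p}) ` verts G" by (simp add: Ts_0 lift_def)
  then show ?case unfolding spreadT_def using xy by auto
next
  case (Suc t)
  then have t: "t < length cs" by simp
  let ?T = "seq_trigraphs G cs ! t"
  let ?P = "fst (cs ! t)" and ?Q = "snd (cs ! t)"
  let ?T' = "seq_trigraphs G cs ! Suc t"
  have T': "?T' = contract ?T ?P ?Q (?P \<union> ?Q)" by (rule Ts_Suc[OF t])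
  have P: "?P \<in> verts ?T" and Q: "?Q \<in> verts ?T" and PQ: "?P \<noteq> ?Q"
    using pd t unfolding partial_d_sequence_def by auto
  have I: "Inv G ?T" using Inv_Ts[OF wf pd] t by simp
  have IH: "spreadT ?T (vset x y a b)" "spreadT ?T (vset x' y' a' b')" "\<not> (\<exists>R\<in>verts ?T. x \<in> R \<and> y \<in> R)"
    using Suc.IH Suc.prems by auto
  have md: "max_red_deg_le (contract ?T ?P ?Q (?P \<union> ?Q)) 4" using md_Ts[OF pd, of "Suc t"] t T' by simp
  have ninv: "\<not> involves (cs ! t) x y" using Suc.prems by auto
  have sep: "\<not> (\<exists>R\<in>verts ?T'. x \<in> R \<and> y \<in> R)"
  proof
    assume "\<exists>R\<in>verts ?T'. x \<in> R \<and> y \<in> R"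
    then obtain R where R: "R \<in> verts ?T'" "x \<in> R" "y \<in> R" by blast
    show False
    proof (cases "R = ?P \<union> ?Q")
      case True
      then show False using R IH(3) P Q ninv unfolding involves_def by blast
    next
      case False
      then have "R \<in> verts ?T" using R(1) unfolding T' verts_contract by auto
      then show False using R IH(3) by blast
    qed
  qed
  have gd: "gad G x y a b" using wf vj unfolding gad_def vertical_set_def by blast
  have gd': "gad G x' y' a' b'" using wf vj' unfolding gad_def vertical_set_def by blast
  have att: "attached G a b {x,y}" using vj unfolding vertical_set_def by blast
  have sp1: "spreadT ?T' (vset x y a b)"
    unfolding spreadT_def
  proof (intro ballI impI)
    fix R u v assume R: "R \<in> verts ?T'" and uv: "u \<in> vset x y a b" "v \<in> vset x y a b" "u \<in> R \<and> v \<in> R"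
    show "u = v"
    proof (rule ccontr)
      assume "u \<noteq> v"
      moreover have R2: "R \<in> verts (contract ?T ?P ?Q (?P \<union> ?Q))" using R T' by simp
      ultimately have "u \<in> {x,y} \<and> v \<in> {x,y}"
        using step_gen[OF gd I P Q PQ IH(1) md R2 uv(1) uv(2)] uv(3) by blast
      then have "x \<in> R \<and> y \<in> R" using uv \<open>u \<noteq> v\<close> by blast
      then show False using sep R by blast
    qed
  qed
  have sp2: "spreadT ?T' (vset x' y' a' b')"
    unfolding spreadT_def
  proof (intro ballI impI)
    fix R u v assume R: "R \<in> verts ?T'" and uv: "u \<in> vset x' y' a' b'" "v \<in> vset x' y' a' b'" "u \<in> R \<and> v \<in> R"
    show "u = v"
    proof (rule ccontr)
      assume "u \<noteq> v"
      moreover have R2: "R \<in> verts (contract ?T ?P ?Q (?P \<union> ?Q))" using R T' by simp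
      ultimately have "u \<in> {x',y'} \<and> v \<in> {x',y'}"
        using step_gen[OF gd' I P Q PQ IH(2) md R2 uv(1) uv(2)] uv(3) by blast
      then have xy': "x' \<in> R \<and> y' \<in> R" using uv \<open>u \<noteq> v\<close> by blast
      have I': "Inv G ?T'" using Inv_Ts[OF wf pd] t by simp
      have "5 \<le> red_deg ?T' R" using xy_case[OF wf I' att sp1 R _ _ ar] xy' by blast
      moreover have "red_deg ?T' R \<le> 4" using md_Ts[OF pd, of "Suc t"] t R unfolding max_red_deg_le_def by auto
      ultimately show False by simp
    qed
  qed
  show ?case using sp1 sp2 sep by blast
qed

theorem lemma4p11:
  fixes G :: "'v trigraph"
    and x y x' y' :: 'v and a b a' b' :: "nat \<Rightarrow> 'v"
    and cs :: "('v set \<times> 'v set) list"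
  assumes "wf_trigraph G"
    and "vertical_set G x y a b"
    and "vertical_set G x' y' a' b'"
    and "vset x y a b \<inter> vset x' y' a' b' = {}"
    and "arc G (vset x y a b) x' y'"
    and "attachment_rule G a b {x, y}"
    and "attachment_rule G a' b' {x', y'}"
    and "partial_d_sequence G 4 cs"
    and "i < length cs"
    and "p \<in> vset x' y' a' b'" and "q \<in> vset x' y' a' b'"
    and "involves (cs ! i) p q"
  shows "\<exists>k \<le> i. involves (cs ! k) x y"
proof (rule ccontr)
  assume "\<not> (\<exists>k \<le> i. involves (cs ! k) x y)"
  then have nk: "\<forall>k<Suc i. \<not> involves (cs ! k) x y" by auto
  have A: "Suc i \<le> length cs" using assms(9) by simp
  have "spreadT (seq_trigraphs G cs ! Suc i) (vset x y a b) \<and> spreadT (seq_trigraphs G cs ! Suc i) (vset x' y' a' b')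
     \<and> \<not> (\<exists>R\<in>verts (seq_trigraphs G cs ! Suc i). x \<in> R \<and> y \<in> R)"
    by (rule main_ind[OF assms(1,2,3,5,8) A nk])
  then have spr: "spreadT (seq_trigraphs G cs ! Suc i) (vset x' y' a' b')" by blast
  have Rm: "fst (cs!i) \<union> snd (cs!i) \<in> verts (seq_trigraphs G cs ! Suc i)"
    by (simp add: Ts_Suc[OF assms(9)] verts_contract)
  have sp: "\<And>u v. u \<in> vset x' y' a' b' \<Longrightarrow> v \<in> vset x' y' a' b' \<Longrightarrow> u \<in> fst (cs!i) \<union> snd (cs!i) \<Longrightarrow> v \<in> fst (cs!i) \<union> snd (cs!i) \<Longrightarrow> u = v"
  proof -
    have sp0: "\<forall>u\<in>vset x' y' a' b'. \<forall>v\<in>vset x' y' a' b'. u \<in> fst (cs!i) \<union> snd (cs!i) \<and> v \<in> fst (cs!i) \<union> snd (cs!i) \<longrightarrow> u = v"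
      using spr Rm unfolding spreadT_def by (rule bspec)
    fix u v assume uv: "u \<in> vset x' y' a' b'" "v \<in> vset x' y' a' b'" "u \<in> fst (cs!i) \<union> snd (cs!i)" "v \<in> fst (cs!i) \<union> snd (cs!i)"
    show "u = v" using sp0[rule_format, OF uv(1,2)] uv(3,4) by simp
  qed
  have "p \<in> fst (cs!i) \<union> snd (cs!i)" "q \<in> fst (cs!i) \<union> snd (cs!i)" using assms(12) unfolding involves_def by blast+
  then have "p = q" using sp[OF assms(10,11)] by blast
  have P: "fst (cs!i) \<in> verts (seq_trigraphs G cs ! i)" and Q: "snd (cs!i) \<in> verts (seq_trigraphs G cs ! i)"
    and PQ: "fst (cs!i) \<noteq> snd (cs!i)" using assms(8,9) unfolding partial_d_sequence_def by auto
  have I: "Inv G (seq_trigraphs G cs ! i)" using Inv_Ts[OF assms(1,8)] assms(9) by simp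
  have "fst (cs!i) \<inter> snd (cs!i) = {}" using InvD(3)[OF I P Q PQ] .
  then show False using assms(12) \<open>p = q\<close> unfolding involves_def by blast
qed


end
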